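(* Let $M\in\{0,1\}^{m\times n}$ with $m,n$ even. Then there exist $X_0\subset[m]$ and $Y_0\subset[n]$ with $|X_0|=m/2$ and $|Y_0|=n/2$ such that $$\operatorname{disc}(X_0,Y_0)\leq -\operatorname{disc}^{-}(M)/12.$$
   Context: For $M\in\{0,1\}^{m\times n}$, $|M|$ is the number of $1$ entries, $p=|M|/(mn)$, and for $X\subset[m]$, $Y\subset[n]$, $\operatorname{disc}(X,Y)=|M[X\times Y]|-p|X||Y|$, where $|M[X\times Y]|$ is the number of $1$ entries of the submatrix with rows $X$ and columns $Y$. The negative discrepancy is $\operatorname{disc}^{-}(M)=\max_{X\subset[m],Y\subset[n]}(-\operatorname{disc}(X,Y))$. *)

theory Defs
  imports Main Complex_Main
begin

text \<open>A 0/1 matrix with m rows and n columns is modelled as a function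
  M :: nat => nat => nat on the index ranges {0..<m} x {0..<n}, entries in {0,1}.\<close>

definition zero_one_matrix :: "nat \<Rightarrow> nat \<Rightarrow> (nat \<Rightarrow> nat \<Rightarrow> nat) \<Rightarrow> bool" where
  "zero_one_matrix m n M \<longleftrightarrow> (\<forall>i<m. \<forall>j<n. M i j \<in> {0, 1})"

definition ones :: "(nat \<Rightarrow> nat \<Rightarrow> nat) \<Rightarrow> nat set \<Rightarrow> nat set \<Rightarrow> nat" where
  "ones M X Y = (\<Sum>i\<in>X. \<Sum>j\<in>Y. M i j)"

definition density :: "nat \<Rightarrow> nat \<Rightarrow> (nat \<Rightarrow> nat \<Rightarrow> nat) \<Rightarrow> real" where
  "density m n M = real (ones M {0..<m} {0..<n}) / (real m * real n)"

definition disc :: "nat \<Rightarrow> nat \<Rightarrow> (nat \<Rightarrow> nat \<Rightarrow> nat) \<Rightarrow> nat set \<Rightarrow> nat set \<Rightarrow> real" where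
  "disc m n M X Y = real (ones M X Y) - density m n M * real (card X) * real (card Y)"

definition neg_disc :: "nat \<Rightarrow> nat \<Rightarrow> (nat \<Rightarrow> nat \<Rightarrow> nat) \<Rightarrow> real" where
  "neg_disc m n M = Max {- disc m n M X Y | X Y. X \<subseteq> {0..<m} \<and> Y \<subseteq> {0..<n}}"

end

theory Submission
  imports Defs
begin

lemma half_min:
  fixes r u :: "nat \<Rightarrow> real" and m :: nat
  assumes ev: "even m" and ub: "\<forall>i<m. 0 \<le> u i \<and> u i \<le> 1"
    and su: "(\<Sum>i<m. u i) = real m / 2"
  shows "\<exists>X0. X0 \<subseteq> {..<m} \<and> card X0 = m div 2 \<and> (\<Sum>i\<in>X0. r i) \<le> (\<Sum>i<m. u i * r i)"
proof -
  define F where "F = {X. X \<subseteq> {..<m} \<and> card X = m div 2}"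
  define f where "f = (\<lambda>X. \<Sum>i\<in>X. r i)"
  have finF: "finite F" unfolding F_def
    by (rule finite_subset[of _ "Pow {..<m}"]) auto
  have "{..<m div 2} \<in> F" unfolding F_def by auto
  hence neF: "F \<noteq> {}" by auto
  have "Min (f ` F) \<in> f ` F" using finF neF by (intro Min_in) auto
  then obtain X0 where X0F: "X0 \<in> F" and X0min: "f X0 = Min (f ` F)" by auto
  have minp: "f X0 \<le> f X" if "X \<in> F" for X
    using X0min finF that by simp
  have X0sub: "X0 \<subseteq> {..<m}" and cX0: "card X0 = m div 2" using X0F F_def by auto
  have finX0: "finite X0" using X0sub finite_subset by blast
  have swap: "r i \<le> r j" if i: "i \<in> X0" and j: "j < m" "j \<notin> X0" for i j
  proof (rule ccontr)
    assume "\<not> r i \<le> r j"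
    define X' where "X' = insert j (X0 - {i})"
    have "card X' = card X0" unfolding X'_def using finX0 i j
      by (simp add: card.insert_remove) (metis card_Diff1_less card_gt_0_iff empty_iff
          Suc_pred card_Diff_singleton)
    hence "X' \<in> F" using F_def X'_def X0sub j cX0 by auto
    moreover have "f X' = r j + f X0 - r i" unfolding X'_def f_def using finX0 i j
      by (simp add: sum_diff1)
    ultimately show False using minp \<open>\<not> r i \<le> r j\<close> by fastforce
  qed
  show ?thesis
  proof (cases "X0 = {}")
    case True
    hence "m = 0" using cX0 ev by auto
    thus ?thesis using True by auto
  next
    case False
    define t where "t = Max (r ` X0)"
    have tin: "t \<in> r ` X0" unfolding t_def using False finX0 by (intro Max_in) auto
    have le_t: "r i \<le> t" if "i \<in> X0" for i unfolding t_def using finX0 that by simp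
    have ge_t: "t \<le> r j" if "j < m" "j \<notin> X0" for j using tin swap that by auto
    define C where "C = {..<m} - X0"
    have split: "(\<Sum>i<m. g i) = (\<Sum>i\<in>C. g i) + (\<Sum>i\<in>X0. g i)" for g :: "nat \<Rightarrow> real"
      unfolding C_def using X0sub by (intro sum.subset_diff) auto
    have "(\<Sum>i\<in>C. u i * t) \<le> (\<Sum>i\<in>C. u i * r i)"
      using ub ge_t by (intro sum_mono mult_left_mono) (auto simp: C_def)
    moreover have "(\<Sum>i\<in>X0. r i) \<le> (\<Sum>i\<in>X0. u i * r i + (1 - u i) * t)"
    proof (intro sum_mono)
      fix i assume "i \<in> X0"
      hence "(1 - u i) * r i \<le> (1 - u i) * t" using le_t ub X0sub
        by (intro mult_left_mono) auto
      thus "r i \<le> u i * r i + (1 - u i) * t" by (simp add: algebra_simps)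
    qed
    moreover have "(\<Sum>i\<in>X0. (1 - u i) * t) = (\<Sum>i\<in>C. u i * t)"
    proof -
      have "(\<Sum>i\<in>C. u i) + (\<Sum>i\<in>X0. u i) = real (card X0)"
        using split[of u] su cX0 ev by auto
      hence "(\<Sum>i\<in>X0. (1 - u i)) = (\<Sum>i\<in>C. u i)"
        by (simp add: sum_subtractf)
      thus ?thesis by (simp add: sum_distrib_right[symmetric])
    qed
    ultimately have "(\<Sum>i\<in>X0. r i) \<le> (\<Sum>i<m. u i * r i)"
      using split[of "\<lambda>i. u i * r i"] by (simp add: sum.distrib)
    thus ?thesis using X0sub cX0 by auto
  qed
qed

definition bil :: "nat \<Rightarrow> nat \<Rightarrow> (nat \<Rightarrow> nat \<Rightarrow> real) \<Rightarrow> (nat \<Rightarrow> real) \<Rightarrow> (nat \<Rightarrow> real) \<Rightarrow> real" where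
  "bil m n A f g = (\<Sum>i<m. \<Sum>j<n. f i * A i j * g j)"

definition ind :: "nat set \<Rightarrow> nat \<Rightarrow> real" where
  "ind X i = (if i \<in> X then 1 else 0)"

lemma bil_affine:
  "bil m n A (\<lambda>i. c + s * f i) (\<lambda>j. d + t * g j) =
    c*d*bil m n A (\<lambda>_. 1) (\<lambda>_. 1) + c*t*bil m n A (\<lambda>_. 1) g + s*d*bil m n A f (\<lambda>_. 1) + s*t*bil m n A f g"
  unfolding bil_def by (simp add: algebra_simps sum.distrib sum_distrib_left)

lemma bil_row: "bil m n A f g = (\<Sum>i<m. f i * (\<Sum>j<n. A i j * g j))"
  unfolding bil_def by (simp add: sum_distrib_left mult.assoc)

lemma bil_col: "bil m n A f g = (\<Sum>j<n. (\<Sum>i<m. f i * A i j) * g j)"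
  unfolding bil_def by (subst sum.swap) (simp add: sum_distrib_right)

lemma sum_ind: "X \<subseteq> {..<m} \<Longrightarrow> (\<Sum>i<m. ind X i * h i) = (\<Sum>i\<in>X. h i)"
proof -
  assume "X \<subseteq> {..<m}"
  hence "X = {..<m} \<inter> X" by auto
  hence "(\<Sum>i\<in>X. h i) = (\<Sum>i<m. if i \<in> X then h i else 0)"
    by (metis finite_lessThan sum.inter_restrict)
  moreover have "(\<Sum>i<m. ind X i * h i) = (\<Sum>i<m. if i \<in> X then h i else 0)"
    by (intro sum.cong) (auto simp: ind_def)
  ultimately show ?thesis by simp
qed

lemma sum_ind': "X \<subseteq> {..<m} \<Longrightarrow> (\<Sum>i<m. h i * ind X i) = (\<Sum>i\<in>X. h i)"
  using sum_ind[of X m h] by (simp add: mult.commute)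

lemma disc_bil:
  assumes "X \<subseteq> {0..<m}" "Y \<subseteq> {0..<n}"
  shows "disc m n M X Y = bil m n (\<lambda>i j. real (M i j) - density m n M) (ind X) (ind Y)"
proof -
  have X: "X \<subseteq> {..<m}" and Y: "Y \<subseteq> {..<n}" using assms by auto
  have "bil m n (\<lambda>i j. real (M i j) - density m n M) (ind X) (ind Y)
      = (\<Sum>i<m. ind X i * (\<Sum>j<n. (real (M i j) - density m n M) * ind Y j))"
    by (rule bil_row)
  also have "\<dots> = (\<Sum>i\<in>X. (\<Sum>j\<in>Y. (real (M i j) - density m n M)))"
    using X Y by (simp add: sum_ind sum_ind')
  also have "\<dots> = real (ones M X Y) - density m n M * real (card X) * real (card Y)"
    by (simp add: ones_def sum_subtractf)
  finally show ?thesis unfolding disc_def by simp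
qed

lemma bil_one_one: "bil m n (\<lambda>i j. real (M i j) - density m n M) (\<lambda>_. 1) (\<lambda>_. 1) = 0"
proof (cases "m = 0 \<or> n = 0")
  case True thus ?thesis unfolding bil_def by auto
next
  case False
  have "bil m n (\<lambda>i j. real (M i j) - density m n M) (\<lambda>_. 1) (\<lambda>_. 1)
     = real (ones M {0..<m} {0..<n}) - real m * real n * density m n M"
    unfolding bil_def ones_def by (simp add: sum_subtractf atLeast0LessThan)
  thus ?thesis using False unfolding density_def by simp
qed

lemma signs:
  fixes P Q R D a b :: real
  assumes "0 \<le> a" "a \<le> 1" "0 \<le> b" "b \<le> 1" "- D = R + b * Q + a * P"
  shows "\<exists>s t. \<bar>s\<bar> \<le> 1 \<and> \<bar>t\<bar> \<le> 1 \<and> s * t * R + t * P + s * Q \<le> - D / 3"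
proof -
  have 1: "\<bar>b * Q\<bar> \<le> \<bar>Q\<bar>" using assms by (simp add: abs_mult mult_left_le_one_le)
  have 2: "\<bar>a * P\<bar> \<le> \<bar>P\<bar>" using assms by (simp add: abs_mult mult_left_le_one_le)
  have D: "D \<le> \<bar>R\<bar> + \<bar>Q\<bar> + \<bar>P\<bar>" using 1 2 assms(5) by linarith
  consider "\<bar>R\<bar> \<ge> \<bar>P\<bar> \<and> \<bar>R\<bar> \<ge> \<bar>Q\<bar>" | "\<bar>P\<bar> \<ge> \<bar>R\<bar> \<and> \<bar>P\<bar> \<ge> \<bar>Q\<bar>"
    | "\<bar>Q\<bar> \<ge> \<bar>R\<bar> \<and> \<bar>Q\<bar> \<ge> \<bar>P\<bar>" by linarith
  thus ?thesis
  proof cases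
    case 1
    show ?thesis
    proof (cases "R \<ge> 0")
      case True
      show ?thesis
      proof (cases "Q - P \<le> 0")
        case True
        thus ?thesis using 1 D \<open>R \<ge> 0\<close> by (intro exI[of _ 1] exI[of _ "-1"]) auto
      next
        case False
        thus ?thesis using 1 D \<open>R \<ge> 0\<close> by (intro exI[of _ "-1"] exI[of _ "1"]) auto
      qed
    next
      case False
      show ?thesis
      proof (cases "Q + P \<le> 0")
        case True
        thus ?thesis using 1 D \<open>\<not> R \<ge> 0\<close> by (intro exI[of _ 1] exI[of _ "1"]) auto
      next
        case False
        thus ?thesis using 1 D \<open>\<not> R \<ge> 0\<close> by (intro exI[of _ "-1"] exI[of _ "-1"]) auto
      qed
    qed
  next
    case 2
    show ?thesis
    proof (cases "P \<ge> 0")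
      case True
      thus ?thesis using 2 D by (intro exI[of _ 0] exI[of _ "-1"]) auto
    next
      case False
      thus ?thesis using 2 D by (intro exI[of _ 0] exI[of _ "1"]) auto
    qed
  next
    case 3
    show ?thesis
    proof (cases "Q \<ge> 0")
      case True
      thus ?thesis using 3 D by (intro exI[of _ "-1"] exI[of _ "0"]) auto
    next
      case False
      thus ?thesis using 3 D by (intro exI[of _ 1] exI[of _ "0"]) auto
    qed
  qed
qed

theorem claim2p2:
  fixes m n :: nat and M :: "nat \<Rightarrow> nat \<Rightarrow> nat"
  assumes "zero_one_matrix m n M" and "even m" and "even n"
  shows "\<exists>X0 Y0. X0 \<subseteq> {0..<m} \<and> Y0 \<subseteq> {0..<n} \<and> card X0 = m div 2 \<and> card Y0 = n div 2 \<and>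
           disc m n M X0 Y0 \<le> - neg_disc m n M / 12"
proof -
  define A where "A = (\<lambda>i j. real (M i j) - density m n M)"
  define B where "B = bil m n A"
  define S where "S = {- disc m n M X Y | X Y. X \<subseteq> {0..<m} \<and> Y \<subseteq> {0..<n}}"
  have S_eq: "S = (\<lambda>(X, Y). - disc m n M X Y) ` (Pow {0..<m} \<times> Pow {0..<n})"
    unfolding S_def by auto
  have "Max S \<in> S" unfolding S_eq by (intro Max_in) auto
  then obtain X Y where X: "X \<subseteq> {0..<m}" and Y: "Y \<subseteq> {0..<n}"
    and DXY: "neg_disc m n M = - disc m n M X Y"
    unfolding neg_disc_def S_def[symmetric] by (auto simp: S_def)
  define D where "D = neg_disc m n M"
  define a where "a = real (card X) / real m"
  define b where "b = real (card Y) / real n"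
  have cX: "card X \<le> m" using X by (metis card_atLeastLessThan card_mono finite_atLeastLessThan diff_zero)
  have cY: "card Y \<le> n" using Y by (metis card_atLeastLessThan card_mono finite_atLeastLessThan diff_zero)
  have a01: "0 \<le> a" "a \<le> 1" unfolding a_def using cX by (auto simp: divide_le_eq_1)
  have b01: "0 \<le> b" "b \<le> 1" unfolding b_def using cY by (auto simp: divide_le_eq_1)
  define Xt where "Xt = (\<lambda>i. ind X i - a)"
  define Yt where "Yt = (\<lambda>j. ind Y j - b)"
  define P where "P = B (\<lambda>_. 1) Yt"
  define Q where "Q = B Xt (\<lambda>_. 1)"
  define R where "R = B Xt Yt"
  have B11: "B (\<lambda>_. 1) (\<lambda>_. 1) = 0" unfolding B_def A_def by (rule bil_one_one)
  have eqs: "ind X = (\<lambda>i. a + 1 * Xt i)" "ind Y = (\<lambda>j. b + 1 * Yt j)"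
    unfolding Xt_def Yt_def by auto
  have "B (ind X) (ind Y) = R + b * Q + a * P"
    unfolding P_def Q_def R_def B_def eqs using B11[unfolded B_def] bil_affine[of m n A a 1 Xt b 1 Yt]
    by simp
  moreover have "disc m n M X Y = B (ind X) (ind Y)"
    unfolding B_def A_def using X Y by (rule disc_bil)
  ultimately have "- D = R + b * Q + a * P" using DXY D_def by simp
  then obtain s t where st: "\<bar>s\<bar> \<le> 1" "\<bar>t\<bar> \<le> 1" "s * t * R + t * P + s * Q \<le> - D / 3"
    using signs a01 b01 by blast
  define u where "u = (\<lambda>i. 1/2 + (s/2) * Xt i)"
  define v where "v = (\<lambda>j. 1/2 + (t/2) * Yt j)"
  have "B u v = (s * t * R + t * P + s * Q) / 4"
    unfolding u_def v_def P_def Q_def R_def B_def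
    using B11[unfolded B_def] bil_affine[of m n A "1/2" "s/2" Xt "1/2" "t/2" Yt]
    by (simp add: field_simps)
  hence Buv: "B u v \<le> - D / 12" using st by simp
  have Xt_b: "\<bar>Xt i\<bar> \<le> 1" for i unfolding Xt_def ind_def using a01 by auto
  have Yt_b: "\<bar>Yt i\<bar> \<le> 1" for i unfolding Yt_def ind_def using b01 by auto
  have u_b: "0 \<le> u i \<and> u i \<le> 1" for i
  proof -
    have "\<bar>s * Xt i\<bar> \<le> 1" using st Xt_b[of i] by (simp add: abs_mult mult_le_one)
    thus ?thesis unfolding u_def by (auto simp: abs_le_iff)
  qed
  have v_b: "0 \<le> v i \<and> v i \<le> 1" for i
  proof -
    have "\<bar>t * Yt i\<bar> \<le> 1" using st Yt_b[of i] by (simp add: abs_mult mult_le_one)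
    thus ?thesis unfolding v_def by (auto simp: abs_le_iff)
  qed
  have sXt: "(\<Sum>i<m. Xt i) = 0"
  proof -
    have "(\<Sum>i<m. ind X i) = real (card X)" using sum_ind[of X m "\<lambda>_. 1"] X by (auto simp: atLeast0LessThan)
    thus ?thesis unfolding Xt_def a_def using cX by (simp add: sum_subtractf)
  qed
  have sYt: "(\<Sum>j<n. Yt j) = 0"
  proof -
    have "(\<Sum>j<n. ind Y j) = real (card Y)" using sum_ind[of Y n "\<lambda>_. 1"] Y by (auto simp: atLeast0LessThan)
    thus ?thesis unfolding Yt_def b_def using cY by (simp add: sum_subtractf)
  qed
  have su: "(\<Sum>i<m. u i) = real m / 2"
    unfolding u_def using sXt by (simp add: sum.distrib sum_divide_distrib[symmetric] sum_distrib_left[symmetric])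
  have sv: "(\<Sum>j<n. v j) = real n / 2"
    unfolding v_def using sYt by (simp add: sum.distrib sum_divide_distrib[symmetric] sum_distrib_left[symmetric])
  obtain X0 where X0: "X0 \<subseteq> {..<m}" "card X0 = m div 2"
    and X0le: "(\<Sum>i\<in>X0. (\<Sum>j<n. A i j * v j)) \<le> (\<Sum>i<m. u i * (\<Sum>j<n. A i j * v j))"
    using half_min[OF assms(2), of u "\<lambda>i. \<Sum>j<n. A i j * v j"] u_b su by blast
  have "B (ind X0) v \<le> B u v"
    using X0le X0 unfolding B_def bil_row by (simp add: sum_ind)
  obtain Y0 where Y0: "Y0 \<subseteq> {..<n}" "card Y0 = n div 2"
    and Y0le: "(\<Sum>j\<in>Y0. (\<Sum>i<m. ind X0 i * A i j)) \<le> (\<Sum>j<n. v j * (\<Sum>i<m. ind X0 i * A i j))"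
    using half_min[OF assms(3), of v "\<lambda>j. \<Sum>i<m. ind X0 i * A i j"] v_b sv by blast
  have "B (ind X0) (ind Y0) \<le> B (ind X0) v"
    using Y0le Y0 unfolding B_def bil_col by (simp add: sum_ind sum_ind' mult.commute)
  moreover have "disc m n M X0 Y0 = B (ind X0) (ind Y0)"
    unfolding B_def A_def using X0 Y0 by (intro disc_bil) auto
  ultimately have "disc m n M X0 Y0 \<le> - D / 12"
    using \<open>B (ind X0) v \<le> B u v\<close> Buv by linarith
  thus ?thesis using X0 Y0 D_def by (intro exI[of _ X0] exI[of _ Y0]) auto
qed

end
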